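(* Let $S$ be a Phillips symmetric operator in a separable Hilbert space and let $A$ be a proper extension of $S$ (i.e. $S\subset A\subset S^*$). Then the spectrum $\sigma(A)$ is one of the following sets: (i) $\mathbb R$; (ii) $\mathbb C_-\cup\mathbb R$ or $\mathbb R\cup\mathbb C_+$; (iii) $\mathbb C$.
   Context: A closed densely defined symmetric operator $S$ with equal nonzero defect numbers is a Phillips symmetric operator (PSO) if its characteristic function is constant on $\mathbb C_+$; here, given a boundary triplet $(\mathcal H,\Gamma_-,\Gamma_+)$ of $S^*$ (i.e. $\Gamma_\pm:\mathcal D(S^* )\to\mathcal H$ linear, $(S^*f,g)-(f,S^*g)=i[(\Gamma_+f,\Gamma_+g)-(\Gamma_-f,\Gamma_-g)]$, $(\Gamma_-,\Gamma_+)$ surjective onto $\mathcal H\oplus\mathcal H$), the characteristic function $\Theta(\lambda)$, $\lambda\in\mathbb C_+$, is the bounded operator in $\mathcal H$ with $\mathcal D(S)\dotplus\ker(S^*-\lambda I)=\{f\in\mathcal D(S^* ):\Theta(\lambda)\Gamma_+f=\Gamma_-f\}$. *)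

theory Defs
  imports "HOL-Analysis.Analysis" "HOL-Library.Equipollence"
begin

text \<open>Complex pre-Hilbert structure on a type with addition: scalar multiplication and an
inner product (linear in the first argument, conjugate-linear in the second).\<close>

record 'a cip =
  smul :: "complex \<Rightarrow> 'a \<Rightarrow> 'a"
  inner :: "'a \<Rightarrow> 'a \<Rightarrow> complex"

definition cnorm :: "('a, 'b) cip_scheme \<Rightarrow> 'a \<Rightarrow> real" where
  "cnorm V x = sqrt (Re (inner V x x))"

definition hilbert_space :: "('a::ab_group_add) cip \<Rightarrow> bool" where
  "hilbert_space V \<longleftrightarrow>
     (\<forall>a x y. smul V a (x + y) = smul V a x + smul V a y) \<and>
     (\<forall>a b x. smul V (a + b) x = smul V a x + smul V b x) \<and>
     (\<forall>a b x. smul V a (smul V b x) = smul V (a * b) x) \<and>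
     (\<forall>x. smul V 1 x = x) \<and>
     (\<forall>x y z. inner V (x + y) z = inner V x z + inner V y z) \<and>
     (\<forall>a x y. inner V (smul V a x) y = a * inner V x y) \<and>
     (\<forall>x y. inner V y x = cnj (inner V x y)) \<and>
     (\<forall>x. Im (inner V x x) = 0 \<and> Re (inner V x x) \<ge> 0) \<and>
     (\<forall>x. inner V x x = 0 \<longrightarrow> x = 0) \<and>
     (\<forall>X :: nat \<Rightarrow> 'a. (\<forall>e>0. \<exists>N. \<forall>m\<ge>N. \<forall>n\<ge>N. cnorm V (X m - X n) < e)
        \<longrightarrow> (\<exists>L. (\<lambda>n. cnorm V (X n - L)) \<longlonglongrightarrow> 0))"

definition separable_space :: "('a::ab_group_add) cip \<Rightarrow> bool" where
  "separable_space V \<longleftrightarrow>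
     (\<exists>D. countable D \<and> (\<forall>x e. e > 0 \<longrightarrow> (\<exists>d\<in>D. cnorm V (x - d) < e)))"

text \<open>Linear operators are represented by their graphs.\<close>

definition graph_subspace :: "('a::ab_group_add) cip \<Rightarrow> ('a \<times> 'a) set \<Rightarrow> bool" where
  "graph_subspace V G \<longleftrightarrow> (0, 0) \<in> G \<and>
     (\<forall>x y u v. (x, y) \<in> G \<longrightarrow> (u, v) \<in> G \<longrightarrow> (x + u, y + v) \<in> G) \<and>
     (\<forall>a x y. (x, y) \<in> G \<longrightarrow> (smul V a x, smul V a y) \<in> G)"

definition is_operator :: "('a::ab_group_add) cip \<Rightarrow> ('a \<times> 'a) set \<Rightarrow> bool" where
  "is_operator V G \<longleftrightarrow> graph_subspace V G \<and> (\<forall>y. (0, y) \<in> G \<longrightarrow> y = 0)"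

definition dom :: "('a \<times> 'a) set \<Rightarrow> 'a set" where
  "dom G = fst ` G"

definition densely_defined :: "('a::ab_group_add) cip \<Rightarrow> ('a \<times> 'a) set \<Rightarrow> bool" where
  "densely_defined V G \<longleftrightarrow> (\<forall>x e. e > 0 \<longrightarrow> (\<exists>d\<in>dom G. cnorm V (x - d) < e))"

definition closed_operator :: "('a::ab_group_add) cip \<Rightarrow> ('a \<times> 'a) set \<Rightarrow> bool" where
  "closed_operator V G \<longleftrightarrow>
     (\<forall>(X :: nat \<Rightarrow> 'a) Y x y. (\<forall>n. (X n, Y n) \<in> G) \<longrightarrow>
        (\<lambda>n. cnorm V (X n - x)) \<longlonglongrightarrow> 0 \<longrightarrow> (\<lambda>n. cnorm V (Y n - y)) \<longlonglongrightarrow> 0 \<longrightarrow> (x, y) \<in> G)"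

definition adjoint :: "('a::ab_group_add) cip \<Rightarrow> ('a \<times> 'a) set \<Rightarrow> ('a \<times> 'a) set" where
  "adjoint V G = {(y, z). \<forall>(x, w) \<in> G. inner V w y = inner V x z}"

definition symmetric_operator :: "('a::ab_group_add) cip \<Rightarrow> ('a \<times> 'a) set \<Rightarrow> bool" where
  "symmetric_operator V S \<longleftrightarrow> is_operator V S \<and> densely_defined V S \<and> S \<subseteq> adjoint V S"

definition defect_space :: "('a::ab_group_add) cip \<Rightarrow> ('a \<times> 'a) set \<Rightarrow> complex \<Rightarrow> 'a set" where
  "defect_space V S l = {f. (f, smul V l f) \<in> adjoint V S}"

definition orthonormal_basis_of :: "('a::ab_group_add) cip \<Rightarrow> 'a set \<Rightarrow> 'a set \<Rightarrow> bool" where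
  "orthonormal_basis_of V N E \<longleftrightarrow> E \<subseteq> N \<and>
     (\<forall>e\<in>E. inner V e e = 1) \<and> (\<forall>e\<in>E. \<forall>e'\<in>E. e \<noteq> e' \<longrightarrow> inner V e e' = 0) \<and>
     (\<forall>x\<in>N. (\<forall>e\<in>E. inner V x e = 0) \<longrightarrow> x = 0)"

text \<open>Equal (Hilbert-dimension) defect numbers \<open>n_+ = dim ker(S* - i)\<close>, \<open>n_- = dim ker(S* + i)\<close>,
  both nonzero.\<close>

definition equal_nonzero_defects :: "('a::ab_group_add) cip \<Rightarrow> ('a \<times> 'a) set \<Rightarrow> bool" where
  "equal_nonzero_defects V S \<longleftrightarrow>
     (\<exists>Ep Em. orthonormal_basis_of V (defect_space V S \<i>) Ep \<and>
              orthonormal_basis_of V (defect_space V S (- \<i>)) Em \<and>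
              Ep \<approx> Em \<and> Ep \<noteq> {})"

definition boundary_triplet ::
  "('a::ab_group_add) cip \<Rightarrow> ('a \<times> 'a) set \<Rightarrow> ('k::ab_group_add) cip \<Rightarrow> ('a \<Rightarrow> 'k) \<Rightarrow> ('a \<Rightarrow> 'k) \<Rightarrow> bool" where
  "boundary_triplet V S K Gm Gp \<longleftrightarrow> hilbert_space K \<and>
     (\<forall>f\<in>dom (adjoint V S). \<forall>g\<in>dom (adjoint V S).
        Gm (f + g) = Gm f + Gm g \<and> Gp (f + g) = Gp f + Gp g) \<and>
     (\<forall>a. \<forall>f\<in>dom (adjoint V S). Gm (smul V a f) = smul K a (Gm f) \<and> Gp (smul V a f) = smul K a (Gp f)) \<and>
     (\<forall>f f' g g'. (f, f') \<in> adjoint V S \<longrightarrow> (g, g') \<in> adjoint V S \<longrightarrow>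
        inner V f' g - inner V f g' = \<i> * (inner K (Gp f) (Gp g) - inner K (Gm f) (Gm g))) \<and>
     (\<forall>a b. \<exists>f\<in>dom (adjoint V S). Gm f = a \<and> Gp f = b)"

definition bounded_op :: "('k::ab_group_add) cip \<Rightarrow> ('k \<Rightarrow> 'k) \<Rightarrow> bool" where
  "bounded_op K C \<longleftrightarrow> (\<forall>x y. C (x + y) = C x + C y) \<and> (\<forall>a x. C (smul K a x) = smul K a (C x)) \<and>
     (\<exists>M. \<forall>x. cnorm K (C x) \<le> M * cnorm K x)"

definition characteristic_function ::
  "('a::ab_group_add) cip \<Rightarrow> ('a \<times> 'a) set \<Rightarrow> ('k::ab_group_add) cip \<Rightarrow> ('a \<Rightarrow> 'k) \<Rightarrow> ('a \<Rightarrow> 'k)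
     \<Rightarrow> (complex \<Rightarrow> 'k \<Rightarrow> 'k) \<Rightarrow> bool" where
  "characteristic_function V S K Gm Gp Th \<longleftrightarrow>
     (\<forall>l. Im l > 0 \<longrightarrow> bounded_op K (Th l) \<and>
        {u + v | u v. u \<in> dom S \<and> v \<in> defect_space V S l} =
        {f \<in> dom (adjoint V S). Th l (Gp f) = Gm f})"

definition phillips_symmetric ::
  "'k::ab_group_add itself \<Rightarrow> ('a::ab_group_add) cip \<Rightarrow> ('a \<times> 'a) set \<Rightarrow> bool" where
  "phillips_symmetric (_ :: 'k itself) V S \<longleftrightarrow>
     symmetric_operator V S \<and> closed_operator V S \<and> equal_nonzero_defects V S \<and>
     (\<exists>(K :: 'k cip) Gm Gp Th C. boundary_triplet V S K Gm Gp \<and>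
        characteristic_function V S K Gm Gp Th \<and> (\<forall>l. Im l > 0 \<longrightarrow> Th l = C))"

text \<open>Spectrum: \<open>\<lambda>\<close> is in the resolvent set iff \<open>A - \<lambda>\<close> maps \<open>D(A)\<close> bijectively onto the
  whole space with bounded inverse.\<close>

definition resolvent_set :: "('a::ab_group_add) cip \<Rightarrow> ('a \<times> 'a) set \<Rightarrow> complex set" where
  "resolvent_set V A = {l. (\<forall>y. \<exists>!x. (x, y + smul V l x) \<in> A) \<and>
      (\<exists>M. \<forall>x y. (x, y + smul V l x) \<in> A \<longrightarrow> cnorm V x \<le> M * cnorm V y)}"

definition spectrum :: "('a::ab_group_add) cip \<Rightarrow> ('a \<times> 'a) set \<Rightarrow> complex set" where
  "spectrum V A = UNIV - resolvent_set V A"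

end

theory Submission
  imports Defs
begin


locale hsp = fixes V :: "('a::ab_group_add) cip" assumes hs: "hilbert_space V"
begin

lemma sm_add_r: "smul V a (x + y) = smul V a x + smul V a y" using hs unfolding hilbert_space_def by metis
lemma sm_add_l: "smul V (a + b) x = smul V a x + smul V b x" using hs unfolding hilbert_space_def by metis
lemma sm_sm: "smul V a (smul V b x) = smul V (a * b) x" using hs unfolding hilbert_space_def by metis
lemma sm_one: "smul V 1 x = x" using hs unfolding hilbert_space_def by metis
lemma ip_add_l: "inner V (x + y) z = inner V x z + inner V y z" using hs unfolding hilbert_space_def by metis
lemma ip_sm_l: "inner V (smul V a x) y = a * inner V x y" using hs unfolding hilbert_space_def by metis
lemma ip_cnj: "inner V y x = cnj (inner V x y)" using hs unfolding hilbert_space_def by metis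
lemma ip_im: "Im (inner V x x) = 0" using hs unfolding hilbert_space_def by metis
lemma ip_re: "Re (inner V x x) \<ge> 0" using hs unfolding hilbert_space_def by metis
lemma ip_z: "inner V x x = 0 \<Longrightarrow> x = 0" using hs unfolding hilbert_space_def by metis
lemma complete: "(\<forall>e>0. \<exists>N. \<forall>m\<ge>N. \<forall>n\<ge>N. cnorm V (X m - X n) < e)
        \<Longrightarrow> (\<exists>L. (\<lambda>n. cnorm V (X n - L)) \<longlonglongrightarrow> 0)" using hs unfolding hilbert_space_def by metis

lemma sm_zero_l[simp]: "smul V 0 x = 0"
  using sm_add_l[of 0 0 x] by simp
lemma sm_zero_r[simp]: "smul V a 0 = 0"
  using sm_add_r[of a 0 0] by simp
lemma sm_neg_l: "smul V (-a) x = - smul V a x"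
  using sm_add_l[of "-a" a x] by (simp add: eq_neg_iff_add_eq_0)
lemma sm_neg_r: "smul V a (-x) = - smul V a x"
  using sm_add_r[of a "-x" x] by (simp add: eq_neg_iff_add_eq_0)
lemma sm_diff_r: "smul V a (x - y) = smul V a x - smul V a y"
  using sm_add_r[of a x "-y"] sm_neg_r by simp
lemma sm_diff_l: "smul V (a - b) x = smul V a x - smul V b x"
  using sm_add_l[of a "-b" x] sm_neg_l by simp
lemma sm_m1: "smul V (-1) x = - x"
  using sm_neg_l[of 1 x] sm_one by simp

lemma ip_zero_l[simp]: "inner V 0 y = 0"
  using ip_add_l[of 0 0 y] by simp
lemma ip_neg_l: "inner V (-x) y = - inner V x y"
  using ip_add_l[of "-x" x y] by (simp add: eq_neg_iff_add_eq_0)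
lemma ip_diff_l: "inner V (x - y) z = inner V x z - inner V y z"
  using ip_add_l[of x "-y" z] ip_neg_l by simp
lemma ip_add_r: "inner V x (y + z) = inner V x y + inner V x z"
  by (metis ip_add_l ip_cnj complex_cnj_add)
lemma ip_sm_r: "inner V x (smul V a y) = cnj a * inner V x y"
  by (metis ip_sm_l ip_cnj complex_cnj_mult)
lemma ip_zero_r[simp]: "inner V x 0 = 0"
  by (metis ip_cnj ip_zero_l complex_cnj_zero)
lemma ip_neg_r: "inner V x (-y) = - inner V x y"
  by (metis ip_neg_l ip_cnj complex_cnj_minus)
lemma ip_diff_r: "inner V x (y - z) = inner V x y - inner V x z"
  using ip_add_r[of x y "-z"] ip_neg_r by simp

definition nsq where "nsq x = Re (inner V x x)"

lemma ip_self: "inner V x x = complex_of_real (nsq x)"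
  using ip_im[of x] unfolding nsq_def by (simp add: complex_eq_iff)
lemma nsq_nonneg: "nsq x \<ge> 0" using ip_re unfolding nsq_def by simp
lemma nsq_eq0: "nsq x = 0 \<longleftrightarrow> x = 0"
proof
  assume "nsq x = 0" then have "inner V x x = 0" using ip_self[of x] by simp
  then show "x = 0" by (rule ip_z)
qed (simp add: nsq_def)
lemma nsq_pos: "x \<noteq> 0 \<Longrightarrow> nsq x > 0"
  using nsq_eq0 nsq_nonneg by (metis less_eq_real_def)

lemma re_cnj_ip: "Re (inner V y x) = Re (inner V x y)"
  using ip_cnj[of y x] by simp

lemma nsq_add: "nsq (x + y) = nsq x + nsq y + 2 * Re (inner V x y)"
  unfolding nsq_def by (simp add: ip_add_l ip_add_r re_cnj_ip[of y x])
lemma nsq_diff: "nsq (x - y) = nsq x + nsq y - 2 * Re (inner V x y)"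
  unfolding nsq_def by (simp add: ip_diff_l ip_diff_r re_cnj_ip[of y x])
lemma nsq_sm: "nsq (smul V a x) = (cmod a)^2 * nsq x"
proof -
  have "inner V (smul V a x) (smul V a x) = (a * cnj a) * inner V x x"
    by (simp add: ip_sm_l ip_sm_r)
  also have "a * cnj a = complex_of_real ((cmod a)^2)" by (metis complex_norm_square)
  finally show ?thesis unfolding nsq_def by simp
qed
lemma nsq_neg: "nsq (-x) = nsq x"
  unfolding nsq_def by (simp add: ip_neg_l ip_neg_r)

lemma CS: "(cmod (inner V x y))^2 \<le> nsq x * nsq y"
proof (cases "y = 0")
  case True then show ?thesis by (simp add: nsq_def)
next
  case False
  then have ny: "nsq y > 0" by (rule nsq_pos)
  define t where "t = inner V x y / complex_of_real (nsq y)"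
  have "0 \<le> nsq (x - smul V t y)" by (rule nsq_nonneg)
  also have "nsq (x - smul V t y) = nsq x + (cmod t)^2 * nsq y - 2 * Re (cnj t * inner V x y)"
    by (simp add: nsq_diff nsq_sm ip_sm_r)
  also have "cnj t * inner V x y = complex_of_real ((cmod (inner V x y))^2 / nsq y)"
    unfolding t_def by (simp add: complex_norm_square[symmetric] mult.commute)
  also have "(cmod t)^2 * nsq y = (cmod (inner V x y))^2 / nsq y"
    unfolding t_def using ny by (simp add: norm_divide power2_eq_square)
  finally have "0 \<le> nsq x - (cmod (inner V x y))^2 / nsq y" by simp
  then have "(cmod (inner V x y))^2 / nsq y \<le> nsq x" by simp
  then show ?thesis using ny by (simp add: divide_le_eq mult.commute)
qed

lemma cnorm_eq: "cnorm V x = sqrt (nsq x)" unfolding cnorm_def nsq_def by simp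
lemma cnorm_nonneg: "cnorm V x \<ge> 0" using nsq_nonneg[of x] by (simp add: cnorm_eq)
lemma cnorm_sq: "(cnorm V x)^2 = nsq x" using nsq_nonneg[of x] by (simp add: cnorm_eq)
lemma cnorm_eq0: "cnorm V x = 0 \<longleftrightarrow> x = 0" using nsq_nonneg[of x] nsq_eq0[of x] by (simp add: cnorm_eq)

lemma CS': "cmod (inner V x y) \<le> cnorm V x * cnorm V y"
proof -
  have "(cmod (inner V x y))^2 \<le> (cnorm V x * cnorm V y)^2"
    using CS[of x y] by (simp add: power_mult_distrib cnorm_sq)
  then show ?thesis using cnorm_nonneg by (meson mult_nonneg_nonneg power2_le_imp_le)
qed

lemma cnorm_add: "cnorm V (x + y) \<le> cnorm V x + cnorm V y"
proof -
  have "Re (inner V x y) \<le> cnorm V x * cnorm V y"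
    using CS'[of x y] complex_Re_le_cmod order_trans by blast
  then have "(cnorm V (x + y))^2 \<le> (cnorm V x + cnorm V y)^2"
    by (simp add: cnorm_sq nsq_add power2_sum)
  then show ?thesis using cnorm_nonneg by (meson add_nonneg_nonneg power2_le_imp_le)
qed
lemma cnorm_sm: "cnorm V (smul V a x) = cmod a * cnorm V x"
  by (simp add: cnorm_eq nsq_sm real_sqrt_mult)
lemma cnorm_neg: "cnorm V (- x) = cnorm V x"
  by (simp add: cnorm_eq nsq_neg)
lemma cnorm_diff: "cnorm V (x - y) \<le> cnorm V x + cnorm V y"
  using cnorm_add[of x "-y"] cnorm_neg[of y] by simp
lemma cnorm_commute: "cnorm V (x - y) = cnorm V (y - x)"
  using cnorm_neg[of "x - y"] by simp

end



context hsp begin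

lemma gs_zero: "graph_subspace V G \<Longrightarrow> (0,0) \<in> G" unfolding graph_subspace_def by blast
lemma gs_add: "graph_subspace V G \<Longrightarrow> (x,y) \<in> G \<Longrightarrow> (u,v) \<in> G \<Longrightarrow> (x+u, y+v) \<in> G"
  unfolding graph_subspace_def by blast
lemma gs_sm: "graph_subspace V G \<Longrightarrow> (x,y) \<in> G \<Longrightarrow> (smul V a x, smul V a y) \<in> G"
  unfolding graph_subspace_def by blast
lemma gs_neg: "graph_subspace V G \<Longrightarrow> (x,y) \<in> G \<Longrightarrow> (-x, -y) \<in> G"
  using gs_sm[of G x y "-1"] by (simp add: sm_m1)
lemma gs_diff: "graph_subspace V G \<Longrightarrow> (x,y) \<in> G \<Longrightarrow> (u,v) \<in> G \<Longrightarrow> (x-u, y-v) \<in> G"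
  using gs_add[of G x y "-u" "-v"] gs_neg[of G u v] by simp

lemma nsq_parallel: "nsq (a - b) + nsq (a + b) = 2 * nsq a + 2 * nsq b"
  by (simp add: nsq_add nsq_diff)

lemma sm_two: "smul V 2 z = z + z"
  using sm_add_l[of 1 1 z] sm_one by simp

lemma cnorm_sq_le: "nsq x \<le> c \<Longrightarrow> cnorm V x \<le> sqrt c"
  by (simp add: cnorm_eq)

end

locale symop = hsp V for V :: "('a::ab_group_add) cip" +
  fixes S :: "('a \<times> 'a) set"
  assumes symm: "symmetric_operator V S" and clo: "closed_operator V S"
begin

lemma S_gs: "graph_subspace V S" using symm unfolding symmetric_operator_def is_operator_def by blast
lemma S_sub: "S \<subseteq> adjoint V S" using symm unfolding symmetric_operator_def by blast
lemma dense: "e > 0 \<Longrightarrow> \<exists>d\<in>Defs.dom S. cnorm V (x - d) < e"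
  using symm unfolding symmetric_operator_def densely_defined_def by blast

lemma adj_iff: "(y,z) \<in> adjoint V S \<longleftrightarrow> (\<forall>x w. (x,w) \<in> S \<longrightarrow> inner V w y = inner V x z)"
  unfolding adjoint_def by auto

lemma dom_iff: "x \<in> Defs.dom S \<longleftrightarrow> (\<exists>w. (x,w) \<in> S)"
  unfolding Defs.dom_def by force

lemma Sst_gs: "graph_subspace V (adjoint V S)"
  unfolding graph_subspace_def adj_iff by (simp add: ip_add_r ip_sm_r)

lemma Sst_op: assumes "(0,z) \<in> adjoint V S" shows "z = 0"
proof -
  have orth: "inner V x z = 0" if "x \<in> Defs.dom S" for x
    using that assms unfolding dom_iff adj_iff by force
  have "nsq z \<le> e" if "e > 0" for e
  proof -
    obtain d where d: "d \<in> Defs.dom S" "cnorm V (z - d) < sqrt e"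
      using dense[of "sqrt e" z] \<open>e > 0\<close> by auto
    have "nsq (z - d) = nsq z + nsq d" using orth[OF d(1)] re_cnj_ip[of z d] by (simp add: nsq_diff)
    then have "nsq z \<le> nsq (z - d)" using nsq_nonneg[of d] by simp
    also have "nsq (z - d) < e"
      using d(2) cnorm_sq[of "z - d"] cnorm_nonneg[of "z-d"] \<open>e>0\<close>
      by (metis real_sqrt_less_iff real_sqrt_pow2 cnorm_eq nsq_nonneg power2_eq_square real_sqrt_mult_self)
    finally show ?thesis by simp
  qed
  then have "nsq z \<le> 0" by (metis field_le_epsilon add_0)
  then show ?thesis using nsq_nonneg[of z] nsq_eq0[of z] by simp
qed

lemma Sst_fun: "(x,y) \<in> adjoint V S \<Longrightarrow> (x,y') \<in> adjoint V S \<Longrightarrow> y = y'"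
  using gs_diff[OF Sst_gs, of x y x y'] Sst_op[of "y - y'"] by simp

lemma S_fun: "(x,y) \<in> S \<Longrightarrow> (x,y') \<in> S \<Longrightarrow> y = y'"
  using S_sub Sst_fun by blast

lemma sym_ip: assumes "(d,w) \<in> S" shows "inner V w d = inner V d w"
proof -
  have "(d,w) \<in> adjoint V S" using S_sub assms by blast
  then show ?thesis using assms unfolding adj_iff by blast
qed

lemma sym_real: "(d,w) \<in> S \<Longrightarrow> Im (inner V d w) = 0"
  using sym_ip[of d w] ip_cnj[of d w] by (metis cnj.simps(2) neg_equal_zero)

lemma lb: assumes "(d,w) \<in> S" shows "(Im \<mu>)^2 * nsq d \<le> nsq (w - smul V \<mu> d)"
proof -
  have e: "w - smul V \<mu> d = (w - smul V (of_real (Re \<mu>)) d) - smul V (\<i> * of_real (Im \<mu>)) d"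
    using sm_add_l[of "of_real (Re \<mu>)" "\<i> * of_real (Im \<mu>)" d] complex_eq[of \<mu>]
    by (simp add: algebra_simps)
  have "Re (inner V (w - smul V (of_real (Re \<mu>)) d) (smul V (\<i> * of_real (Im \<mu>)) d)) = 0"
  proof -
    have "inner V (w - smul V (of_real (Re \<mu>)) d) (smul V (\<i> * of_real (Im \<mu>)) d)
      = (- \<i> * of_real (Im \<mu>)) * (inner V w d - of_real (Re \<mu>) * inner V d d)"
      by (simp add: ip_sm_r ip_diff_l ip_sm_l)
    moreover have "Im (inner V w d) = 0" using sym_real[OF assms] sym_ip[OF assms] by simp
    moreover have "Im (inner V d d) = 0" by (rule ip_im)
    ultimately show ?thesis by simp
  qed
  then have "nsq (w - smul V \<mu> d) = nsq (w - smul V (of_real (Re \<mu>)) d) + (Im \<mu>)^2 * nsq d"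
    unfolding e by (simp add: nsq_diff nsq_sm norm_mult)
  then show ?thesis using nsq_nonneg[of "w - smul V (of_real (Re \<mu>)) d"] by simp
qed

end



context hsp begin

lemma nsq_add_le: "nsq (x + y) \<le> 2 * nsq x + 2 * nsq y"
  using nsq_parallel[of x y] nsq_nonneg[of "x - y"] by simp

lemma cauchy_crit:
  assumes c: "c \<ge> 0" and h: "\<And>m n. nsq (X m - X n) \<le> c * inverse (real (Suc m)) + c * inverse (real (Suc n))"
  shows "\<forall>e>0. \<exists>N. \<forall>m\<ge>N. \<forall>n\<ge>N. cnorm V (X m - X n) < e"
proof (intro allI impI)
  fix e :: real assume e: "e > 0"
  obtain N :: nat where N: "2 * c / e^2 < real N" using reals_Archimedean2 by blast
  have e2: "e^2 > 0" using e by simp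
  have "2 * c < real N * e^2" using N e2 by (simp add: divide_less_eq)
  also have "\<dots> \<le> real (Suc N) * e^2" using e2 by simp
  finally have "2 * c < real (Suc N) * e^2" .
  then have key: "2 * c * inverse (real (Suc N)) < e^2"
    by (simp add: field_simps)
  show "\<exists>N. \<forall>m\<ge>N. \<forall>n\<ge>N. cnorm V (X m - X n) < e"
  proof (intro exI allI impI)
    fix m n assume mn: "N \<le> m" "N \<le> n"
    have a: "c * inverse (real (Suc m)) \<le> c * inverse (real (Suc N))"
      using mn c by (intro mult_left_mono) (auto simp: field_simps)
    have b: "c * inverse (real (Suc n)) \<le> c * inverse (real (Suc N))"
      using mn c by (intro mult_left_mono) (auto simp: field_simps)
    have "nsq (X m - X n) < e^2" using h[of m n] a b key by linarith
    then have "sqrt (nsq (X m - X n)) < sqrt (e^2)" by (simp only: real_sqrt_less_iff)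
    then show "cnorm V (X m - X n) < e" using e by (simp add: cnorm_eq)
  qed
qed

end

context symop begin

lemma H1:
  assumes mu: "Im \<mu> \<noteq> 0"
  shows "\<exists>d w n. (d,w) \<in> S \<and> (n, smul V (cnj \<mu>) n) \<in> adjoint V S \<and> y = (w - smul V \<mu> d) + n"
proof -
  define R where "R = {w - smul V \<mu> d | d w. (d,w) \<in> S}"
  have R0: "0 \<in> R"
  proof -
    have "(0::'a) = 0 - smul V \<mu> 0" by simp
    then show ?thesis unfolding R_def using gs_zero[OF S_gs] by blast
  qed
  have Radd: "r + r' \<in> R" if hr: "r \<in> R" "r' \<in> R" for r r'
  proof -
    obtain d w d' w' where "(d,w) \<in> S" "r = w - smul V \<mu> d" "(d',w') \<in> S" "r' = w' - smul V \<mu> d'"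
      using hr unfolding R_def by blast
    moreover have "(d+d', w+w') \<in> S" using gs_add[OF S_gs] calculation by blast
    moreover have "r + r' = (w + w') - smul V \<mu> (d + d')" using calculation by (simp add: sm_add_r)
    ultimately show ?thesis unfolding R_def by blast
  qed
  have Rsm: "smul V a r \<in> R" if hr: "r \<in> R" for r a
  proof -
    obtain d w where dw: "(d,w) \<in> S" "r = w - smul V \<mu> d"
      using hr unfolding R_def by blast
    have "(smul V a d, smul V a w) \<in> S" using gs_sm[OF S_gs dw(1)] .
    moreover have "smul V a r = smul V a w - smul V \<mu> (smul V a d)"
      using dw(2) by (simp add: sm_diff_r sm_sm mult.commute)
    ultimately show ?thesis unfolding R_def by blast
  qed
  define F where "F = (\<lambda>r. nsq (y - r)) ` R"
  define \<delta> where "\<delta> = Inf F"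
  have Fne: "F \<noteq> {}" using R0 unfolding F_def by blast
  have bdd: "bdd_below F" unfolding F_def using nsq_nonneg by (intro bdd_belowI[of _ 0]) auto
  have dle: "\<delta> \<le> nsq (y - r)" if "r \<in> R" for r
    unfolding \<delta>_def F_def using that bdd unfolding F_def by (intro cInf_lower) auto
  have d0: "\<delta> \<ge> 0" using dle[OF R0] nsq_nonneg
    unfolding \<delta>_def by (metis Fne F_def cInf_greatest image_iff)
  have "\<forall>k::nat. \<exists>r. r \<in> R \<and> nsq (y - r) < \<delta> + inverse (real (Suc k))"
  proof
    fix k :: nat
    have "Inf F < \<delta> + inverse (real (Suc k))" unfolding \<delta>_def by simp
    then obtain v where "v \<in> F" "v < \<delta> + inverse (real (Suc k))" using cInf_lessD[OF Fne] by blast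
    then show "\<exists>r. r \<in> R \<and> nsq (y - r) < \<delta> + inverse (real (Suc k))" unfolding F_def by blast
  qed
  then obtain rr where rr: "\<And>k. rr k \<in> R" "\<And>k. nsq (y - rr k) < \<delta> + inverse (real (Suc k))"
    by metis
  have "\<forall>k. \<exists>d w. (d,w) \<in> S \<and> rr k = w - smul V \<mu> d" using rr(1) unfolding R_def by blast
  then obtain dd ww where dw: "\<And>k. (dd k, ww k) \<in> S" "\<And>k. rr k = ww k - smul V \<mu> (dd k)"
    by metis
  have cr: "nsq (rr j - rr k) \<le> 2 * inverse (real (Suc j)) + 2 * inverse (real (Suc k))" for j k
  proof -
    define m where "m = smul V (1/2) (rr j + rr k)"
    have mR: "m \<in> R" unfolding m_def by (intro Rsm Radd rr)
    have "(y - rr j) + (y - rr k) = smul V 2 (y - m)"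
    proof -
      have "smul V 2 m = rr j + rr k" unfolding m_def by (simp add: sm_sm sm_one)
      then show ?thesis by (simp add: sm_diff_r sm_two algebra_simps)
    qed
    then have "nsq ((y - rr j) + (y - rr k)) = 4 * nsq (y - m)" by (simp add: nsq_sm)
    moreover have "(y - rr j) - (y - rr k) = - (rr j - rr k)" by simp
    ultimately have "nsq (rr j - rr k) + 4 * nsq (y - m) = 2 * nsq (y - rr j) + 2 * nsq (y - rr k)"
      using nsq_parallel[of "y - rr j" "y - rr k"] nsq_neg[of "rr j - rr k"] by simp
    then show ?thesis using dle[OF mR] rr(2)[of j] rr(2)[of k] by linarith
  qed
  have im2: "(Im \<mu>)^2 > 0" using mu by simp
  have cd: "nsq (dd j - dd k) \<le> (2 / (Im \<mu>)^2) * inverse (real (Suc j)) + (2 / (Im \<mu>)^2) * inverse (real (Suc k))" for j k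
  proof -
    have dS: "(dd j - dd k, ww j - ww k) \<in> S" using gs_diff[OF S_gs dw(1) dw(1)] .
    have eq: "(ww j - ww k) - smul V \<mu> (dd j - dd k) = rr j - rr k"
      unfolding dw(2) by (simp add: sm_diff_r algebra_simps)
    from lb[OF dS, of \<mu>] have "(Im \<mu>)^2 * nsq (dd j - dd k) \<le> nsq (rr j - rr k)"
      unfolding eq .
    with cr[of j k] have "(Im \<mu>)^2 * nsq (dd j - dd k) \<le> 2 * inverse (real (Suc j)) + 2 * inverse (real (Suc k))"
      by linarith
    then have "nsq (dd j - dd k) \<le> (2 * inverse (real (Suc j)) + 2 * inverse (real (Suc k))) / (Im \<mu>)^2"
      using im2 by (simp add: le_divide_eq mult.commute)
    also have "\<dots> = (2 / (Im \<mu>)^2) * inverse (real (Suc j)) + (2 / (Im \<mu>)^2) * inverse (real (Suc k))"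
      by (simp add: divide_inverse algebra_simps)
    finally show ?thesis .
  qed
  define c2 where "c2 = 4 + 2 * (cmod \<mu>)^2 * (2 / (Im \<mu>)^2)"
  have cw: "nsq (ww j - ww k) \<le> c2 * inverse (real (Suc j)) + c2 * inverse (real (Suc k))" for j k
  proof -
    have "ww j - ww k = (rr j - rr k) + smul V \<mu> (dd j - dd k)"
      unfolding dw(2) by (simp add: sm_diff_r algebra_simps)
    then have "nsq (ww j - ww k) \<le> 2 * nsq (rr j - rr k) + 2 * ((cmod \<mu>)^2 * nsq (dd j - dd k))"
      using nsq_add_le[of "rr j - rr k" "smul V \<mu> (dd j - dd k)"] by (simp add: nsq_sm)
    also have "\<dots> \<le> 2 * (2 * inverse (real (Suc j)) + 2 * inverse (real (Suc k)))
        + 2 * ((cmod \<mu>)^2 * ((2 / (Im \<mu>)^2) * inverse (real (Suc j)) + (2 / (Im \<mu>)^2) * inverse (real (Suc k))))"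
      using cr[of j k] cd[of j k] by (intro add_mono mult_left_mono) auto
    also have "\<dots> = c2 * inverse (real (Suc j)) + c2 * inverse (real (Suc k))"
      unfolding c2_def by (simp add: algebra_simps)
    finally show ?thesis .
  qed
  obtain L where L: "(\<lambda>n. cnorm V (dd n - L)) \<longlonglongrightarrow> 0"
    using complete[OF cauchy_crit[OF _ cd]] im2 by auto
  obtain W where W: "(\<lambda>n. cnorm V (ww n - W)) \<longlonglongrightarrow> 0"
    using complete[OF cauchy_crit[OF _ cw]] unfolding c2_def using im2 by auto
  have LW: "(L,W) \<in> S" using clo L W dw(1) unfolding closed_operator_def by blast
  define r where "r = W - smul V \<mu> L"
  have rR: "r \<in> R" unfolding R_def r_def using LW by blast
  have "cnorm V (y - r) \<le> sqrt \<delta>"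
  proof (rule LIMSEQ_le_const)
    let ?s = "\<lambda>k. sqrt (\<delta> + inverse (real (Suc k))) + cnorm V (ww k - W) + cmod \<mu> * cnorm V (dd k - L)"
    have "(\<lambda>k. \<delta> + inverse (real (Suc k))) \<longlonglongrightarrow> \<delta>" by (rule LIMSEQ_inverse_real_of_nat_add)
    then have "(\<lambda>k. sqrt (\<delta> + inverse (real (Suc k)))) \<longlonglongrightarrow> sqrt \<delta>" by (rule tendsto_real_sqrt)
    then have "?s \<longlonglongrightarrow> sqrt \<delta> + 0 + cmod \<mu> * 0"
      by (intro tendsto_add tendsto_mult L W tendsto_const)
    then show "?s \<longlonglongrightarrow> sqrt \<delta>" by simp
    show "\<exists>N. \<forall>n\<ge>N. cnorm V (y - r) \<le> ?s n"
    proof (intro exI allI impI)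
      fix k :: nat
      have "y - r = (y - rr k) + ((ww k - W) - smul V \<mu> (dd k - L))"
        unfolding r_def dw(2) by (simp add: sm_diff_r algebra_simps)
      then have "cnorm V (y - r) \<le> cnorm V (y - rr k) + cnorm V ((ww k - W) - smul V \<mu> (dd k - L))"
        using cnorm_add by presburger
      moreover have "cnorm V ((ww k - W) - smul V \<mu> (dd k - L)) \<le> cnorm V (ww k - W) + cmod \<mu> * cnorm V (dd k - L)"
        using cnorm_diff[of "ww k - W" "smul V \<mu> (dd k - L)"] by (simp add: cnorm_sm)
      ultimately have "cnorm V (y - r) \<le> cnorm V (y - rr k) + (cnorm V (ww k - W) + cmod \<mu> * cnorm V (dd k - L))"
        by linarith
      moreover have "cnorm V (y - rr k) \<le> sqrt (\<delta> + inverse (real (Suc k)))"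
        using rr(2)[of k] by (intro cnorm_sq_le) simp
      ultimately show "cnorm V (y - r) \<le> ?s k" by simp
    qed
  qed
  then have min: "nsq (y - r) \<le> \<delta>" using d0 cnorm_sq[of "y - r"] cnorm_nonneg
    by (metis power_mono real_sqrt_pow2)
  define n0 where "n0 = y - r"
  have orth: "inner V n0 r' = 0" if "r' \<in> R" for r'
  proof (rule ccontr)
    assume ne: "inner V n0 r' \<noteq> 0"
    define c where "c = inner V n0 r'"
    define s where "s = 1 / (nsq r' + 1)"
    have s0: "s > 0" unfolding s_def using nsq_nonneg[of r'] by simp
    have s1: "s * nsq r' < 1" unfolding s_def using nsq_nonneg[of r'] by (simp add: field_simps)
    define t where "t = complex_of_real s * c"
    have "r + smul V t r' \<in> R" using Radd[OF rR Rsm[OF that]] .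
    then have "\<delta> \<le> nsq (n0 - smul V t r')" using dle unfolding n0_def by (simp add: algebra_simps)
    also have "nsq (n0 - smul V t r') = nsq n0 + (cmod t)^2 * nsq r' - 2 * Re (cnj t * c)"
      unfolding c_def by (simp add: nsq_diff nsq_sm ip_sm_r)
    also have "cnj t * c = complex_of_real (s * (cmod c)^2)"
      unfolding t_def using complex_norm_square[of c] by (simp add: mult.assoc)
    also have "(cmod t)^2 = s^2 * (cmod c)^2" unfolding t_def using s0 by (simp add: norm_mult power_mult_distrib)
    finally have "\<delta> \<le> nsq n0 + s^2 * (cmod c)^2 * nsq r' - 2 * (s * (cmod c)^2)" by simp
    with min have "0 \<le> s * (cmod c)^2 * (s * nsq r' - 2)" unfolding n0_def by (simp add: algebra_simps power2_eq_square)
    moreover have "s * (cmod c)^2 > 0" using s0 ne unfolding c_def by simp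
    ultimately have "s * nsq r' - 2 \<ge> 0" by (simp add: zero_le_mult_iff)
    with s1 show False by simp
  qed
  have "(n0, smul V (cnj \<mu>) n0) \<in> adjoint V S"
    unfolding adj_iff
  proof (intro allI impI)
    fix d w assume dw': "(d,w) \<in> S"
    have "w - smul V \<mu> d \<in> R" unfolding R_def using dw' by blast
    then have "inner V n0 (w - smul V \<mu> d) = 0" by (rule orth)
    then have "inner V (w - smul V \<mu> d) n0 = 0" using ip_cnj[of n0 "w - smul V \<mu> d"] by simp
    then show "inner V w n0 = inner V d (smul V (cnj \<mu>) n0)" by (simp add: ip_diff_l ip_sm_l ip_sm_r)
  qed
  moreover have "y = (W - smul V \<mu> L) + n0" unfolding n0_def r_def by simp
  ultimately show ?thesis using LW by blast
qed

end



context hsp begin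
lemma sm_cancel: assumes "smul V a x = 0" "a \<noteq> 0" shows "x = 0"
proof -
  have "smul V (1/a) (smul V a x) = x" using assms(2) by (simp add: sm_sm sm_one)
  then show ?thesis using assms(1) by simp
qed
lemma cnorm_le_of_nsq: assumes "nsq x \<le> c^2 * nsq y" "c \<ge> 0" shows "cnorm V x \<le> c * cnorm V y"
proof -
  have "sqrt (nsq x) \<le> sqrt (c^2 * nsq y)" using assms(1) by simp
  then show ?thesis using assms(2) by (simp add: cnorm_eq real_sqrt_mult)
qed
end

context symop begin

lemma ran_orth: assumes "(d,w) \<in> S" "(n, smul V (cnj \<mu>) n) \<in> adjoint V S"
  shows "inner V (w - smul V \<mu> d) n = 0"
proof -
  have "inner V w n = inner V d (smul V (cnj \<mu>) n)" using assms unfolding adj_iff by blast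
  then show ?thesis by (simp add: ip_diff_l ip_sm_l ip_sm_r)
qed

lemma H1b: assumes mu: "Im \<mu> \<noteq> 0"
  shows "\<exists>f. (f, y + smul V \<mu> f) \<in> adjoint V S \<and> cnorm V f \<le> (3 / (2 * \<bar>Im \<mu>\<bar>)) * cnorm V y"
proof -
  obtain d w n where dw: "(d,w) \<in> S" and n: "(n, smul V (cnj \<mu>) n) \<in> adjoint V S"
    and y: "y = (w - smul V \<mu> d) + n" using H1[OF mu] by blast
  have den: "cnj \<mu> - \<mu> \<noteq> 0" using mu by (simp add: complex_eq_iff)
  define c where "c = 1 / (cnj \<mu> - \<mu>)"
  have cc: "c * cnj \<mu> = 1 + \<mu> * c" unfolding c_def using den by (simp add: field_simps)
  define f where "f = d + smul V c n"
  have "(f, w + smul V c (smul V (cnj \<mu>) n)) \<in> adjoint V S"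
    unfolding f_def using gs_add[OF Sst_gs _ gs_sm[OF Sst_gs n]] S_sub dw by blast
  moreover have "w + smul V c (smul V (cnj \<mu>) n) = y + smul V \<mu> f"
  proof -
    have "smul V c (smul V (cnj \<mu>) n) = n + smul V \<mu> (smul V c n)"
      by (simp add: sm_sm cc sm_add_l sm_one)
    then show ?thesis unfolding y f_def by (simp add: sm_add_r algebra_simps)
  qed
  ultimately have f1: "(f, y + smul V \<mu> f) \<in> adjoint V S" by simp
  have o: "inner V (w - smul V \<mu> d) n = 0" by (rule ran_orth[OF dw n])
  have ny: "nsq y = nsq (w - smul V \<mu> d) + nsq n" unfolding y by (simp add: nsq_add o)
  have a: "cnorm V n \<le> 1 * cnorm V y"
    by (rule cnorm_le_of_nsq) (use ny nsq_nonneg[of "w - smul V \<mu> d"] in auto)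
  have im: "\<bar>Im \<mu>\<bar> > 0" using mu by simp
  have "(Im \<mu>)^2 * nsq d \<le> nsq y" using lb[OF dw, of \<mu>] ny nsq_nonneg[of n] by linarith
  moreover have i2: "(Im \<mu>)^2 > 0" using mu by simp
  ultimately have "nsq d \<le> nsq y / (Im \<mu>)^2" by (simp add: le_divide_eq mult.commute)
  then have "nsq d \<le> (1 / \<bar>Im \<mu>\<bar>)^2 * nsq y" by (simp add: power_one_over)
  then have b: "cnorm V d \<le> (1 / \<bar>Im \<mu>\<bar>) * cnorm V y"
    by (rule cnorm_le_of_nsq) (use im in simp)
  have cm: "cmod c = 1 / (2 * \<bar>Im \<mu>\<bar>)"
  proof -
    have "cnj \<mu> - \<mu> = - (2 * \<i> * complex_of_real (Im \<mu>))" by (simp add: complex_eq_iff)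
    then have "cmod (cnj \<mu> - \<mu>) = 2 * \<bar>Im \<mu>\<bar>" by (simp add: norm_mult)
    then show ?thesis unfolding c_def by (simp add: norm_divide)
  qed
  have "cnorm V f \<le> cnorm V d + cmod c * cnorm V n" unfolding f_def using cnorm_add cnorm_sm by metis
  also have "\<dots> \<le> (1 / \<bar>Im \<mu>\<bar>) * cnorm V y + (1 / (2 * \<bar>Im \<mu>\<bar>)) * cnorm V y"
    using a b cm im by (intro add_mono) (auto simp: divide_right_mono)
  also have "\<dots> = (3 / (2 * \<bar>Im \<mu>\<bar>)) * cnorm V y" using im by (simp add: field_simps)
  finally show ?thesis using f1 by blast
qed

lemma DN0: assumes l: "Im l \<noteq> 0" and d: "d \<in> Defs.dom S" and dn: "(d, smul V l d) \<in> adjoint V S"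
  shows "d = 0"
proof -
  obtain w where dw: "(d,w) \<in> S" using d dom_iff by blast
  then have "w = smul V l d" using S_sub Sst_fun dn by blast
  then have "Im (inner V d (smul V l d)) = 0" using sym_real[OF dw] by simp
  then have "Im (cnj l * complex_of_real (nsq d)) = 0" by (simp add: ip_sm_r ip_self)
  then have "nsq d = 0" using l by simp
  then show ?thesis using nsq_eq0 by simp
qed

end




context symop begin

lemma res_transfer:
  assumes Aop: "is_operator V A" and SA: "S \<subseteq> A" and AS: "A \<subseteq> adjoint V S"
    and l: "Im l \<noteq> 0" and l': "Im l' \<noteq> 0"
    and tr1: "\<And>k. (k, smul V l k) \<in> adjoint V S \<Longrightarrow> \<exists>d k'. d \<in> Defs.dom S \<and> (k', smul V l' k') \<in> adjoint V S \<and> k = d + k'"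
    and tr2: "\<And>k. (k, smul V l' k) \<in> adjoint V S \<Longrightarrow> \<exists>d k'. d \<in> Defs.dom S \<and> (k', smul V l k') \<in> adjoint V S \<and> k = d + k'"
    and res: "l \<in> resolvent_set V A"
  shows "l' \<in> resolvent_set V A"
proof -
  have Ags: "graph_subspace V A" using Aop unfolding is_operator_def by blast
  have ex1: "\<And>y. \<exists>!x. (x, y + smul V l x) \<in> A" using res unfolding resolvent_set_def by blast
  obtain M0 where M0: "\<And>x y. (x, y + smul V l x) \<in> A \<Longrightarrow> cnorm V x \<le> M0 * cnorm V y"
    using res unfolding resolvent_set_def by blast
  define M where "M = max M0 0"
  have M: "(x, y + smul V l x) \<in> A \<Longrightarrow> cnorm V x \<le> M * cnorm V y" for x y
    using M0[of x y] cnorm_nonneg[of y] unfolding M_def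
    by (meson max.cobounded1 mult_right_mono order_trans)
  have Mnn: "M \<ge> 0" unfolding M_def by simp
  have uniq: "x1 = x2" if h1: "(x1, y + smul V l' x1) \<in> A" and h2: "(x2, y + smul V l' x2) \<in> A" for x1 x2 y
  proof -
    define x where "x = x1 - x2"
    have xA: "(x, smul V l' x) \<in> A" using gs_diff[OF Ags h1 h2] unfolding x_def by (simp add: sm_diff_r)
    then have xS: "(x, smul V l' x) \<in> adjoint V S" using AS by blast
    obtain d n where d: "d \<in> Defs.dom S" and n: "(n, smul V l n) \<in> adjoint V S" and xe: "x = d + n"
      using tr2[OF xS] by blast
    obtain wd where dwd: "(d, wd) \<in> S" using d dom_iff by blast
    have "(x - d, smul V l' x - wd) \<in> A" using gs_diff[OF Ags xA] dwd SA by blast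
    then have nA: "(n, smul V l' x - wd) \<in> A" using xe by (simp add: algebra_simps)
    then have "smul V l' x - wd = smul V l n" using AS Sst_fun n by blast
    with nA have "(n, 0 + smul V l n) \<in> A" by simp
    moreover have "(0, 0 + smul V l 0) \<in> A" using gs_zero[OF Ags] by simp
    ultimately have "n = 0" using ex1[of 0] by blast
    then have "x = d" using xe by simp
    then have "x = 0" using DN0[OF l' d] xS by simp
    then show ?thesis unfolding x_def by simp
  qed
  define Kf where "Kf = 3 / (2 * \<bar>Im l'\<bar>)"
  define q where "q = cmod (l' - l)"
  define B where "B = M * (1 + q * Kf) + (q / \<bar>Im l'\<bar>) * (Kf + M * (1 + q * Kf))"
  have exist: "\<exists>a. (a, y + smul V l' a) \<in> A \<and> cnorm V a \<le> B * cnorm V y" for y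
  proof -
    obtain f where f: "(f, y + smul V l' f) \<in> adjoint V S" and fb: "cnorm V f \<le> Kf * cnorm V y"
      using H1b[OF l', of y] unfolding Kf_def by blast
    define y1 where "y1 = y + smul V (l' - l) f"
    have f1: "(f, y1 + smul V l f) \<in> adjoint V S"
    proof -
      have "y1 + smul V l f = y + smul V l' f" unfolding y1_def by (simp add: sm_diff_l)
      then show ?thesis using f by simp
    qed
    obtain u where u: "(u, y1 + smul V l u) \<in> A" using ex1[of y1] by blast
    have ub: "cnorm V u \<le> M * cnorm V y1" using M[OF u] .
    define k' where "k' = f - u"
    have k': "(k', smul V l k') \<in> adjoint V S"
      using gs_diff[OF Sst_gs f1, of u "y1 + smul V l u"] u AS unfolding k'_def by (auto simp: sm_diff_r)
    obtain d2 k where d2: "d2 \<in> Defs.dom S" and k: "(k, smul V l' k) \<in> adjoint V S" and ke: "k' = d2 + k"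
      using tr1[OF k'] by blast
    obtain w2 where dw2: "(d2, w2) \<in> S" using d2 dom_iff by blast
    define a where "a = u + d2"
    have aA: "(a, (y1 + smul V l u) + w2) \<in> A" unfolding a_def using gs_add[OF Ags u] dw2 SA by blast
    have af: "a = f - k" unfolding a_def using ke unfolding k'_def by (simp add: algebra_simps)
    have "(a, (y + smul V l' f) - smul V l' k) \<in> adjoint V S" unfolding af using gs_diff[OF Sst_gs f k] .
    moreover have "(y + smul V l' f) - smul V l' k = y + smul V l' a" unfolding af by (simp add: sm_diff_r)
    ultimately have "(a, y + smul V l' a) \<in> adjoint V S" by simp
    then have "(y1 + smul V l u) + w2 = y + smul V l' a" using aA AS Sst_fun by blast
    with aA have aA': "(a, y + smul V l' a) \<in> A" by simp
    have "(d2, smul V l k' - smul V l' k) \<in> adjoint V S"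
      using gs_diff[OF Sst_gs k' k] ke by (simp add: algebra_simps)
    then have w2e: "w2 = smul V l k' - smul V l' k" using dw2 S_sub Sst_fun by blast
    have "w2 - smul V l' d2 = smul V (l - l') k'"
    proof -
      have "d2 = k' - k" using ke by simp
      then show ?thesis unfolding w2e by (simp add: sm_diff_r sm_diff_l)
    qed
    then have "(Im l')^2 * nsq d2 \<le> (cmod (l - l'))^2 * nsq k'" using lb[OF dw2, of l'] by (simp add: nsq_sm)
    then have "nsq d2 \<le> (q / \<bar>Im l'\<bar>)^2 * nsq k'"
      using l' unfolding q_def by (simp add: field_simps power_divide norm_minus_commute)
    then have d2b: "cnorm V d2 \<le> (q / \<bar>Im l'\<bar>) * cnorm V k'"
      by (rule cnorm_le_of_nsq) (simp add: q_def)
    have y1b: "cnorm V y1 \<le> cnorm V y + q * cnorm V f"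
      using cnorm_add[of y "smul V (l' - l) f"] unfolding y1_def q_def cnorm_sm .
    have k'b: "cnorm V k' \<le> cnorm V f + cnorm V u" unfolding k'_def by (rule cnorm_diff)
    have ab: "cnorm V a \<le> cnorm V u + cnorm V d2" unfolding a_def by (rule cnorm_add)
    have q0: "q \<ge> 0" unfolding q_def by simp
    have Kf0: "Kf \<ge> 0" unfolding Kf_def by simp
    have cy: "cnorm V y \<ge> 0" by (rule cnorm_nonneg)
    have "q * cnorm V f \<le> q * (Kf * cnorm V y)" using fb q0 by (rule mult_left_mono)
    moreover have "(1 + q * Kf) * cnorm V y = cnorm V y + q * (Kf * cnorm V y)" by (simp add: algebra_simps)
    ultimately have y1b': "cnorm V y1 \<le> (1 + q * Kf) * cnorm V y" using y1b by linarith
    have "M * cnorm V y1 \<le> M * ((1 + q * Kf) * cnorm V y)" using y1b' Mnn by (rule mult_left_mono)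
    then have ub': "cnorm V u \<le> M * (1 + q * Kf) * cnorm V y" using ub by (simp add: mult.assoc)
    have k'b': "cnorm V k' \<le> (Kf + M * (1 + q * Kf)) * cnorm V y"
      using k'b fb ub' by (simp add: distrib_right)
    have qi: "q / \<bar>Im l'\<bar> \<ge> 0" using q0 by simp
    have d2b': "cnorm V d2 \<le> (q / \<bar>Im l'\<bar>) * ((Kf + M * (1 + q * Kf)) * cnorm V y)"
      using d2b mult_left_mono[OF k'b' qi] by linarith
    have "cnorm V a \<le> B * cnorm V y"
      using ab ub' d2b' unfolding B_def by (simp add: distrib_right mult.assoc)
    with aA' show ?thesis by blast
  qed
  show ?thesis unfolding resolvent_set_def
  proof (intro CollectI conjI allI exI)
    fix y
    obtain a where "(a, y + smul V l' a) \<in> A" using exist by blast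
    then show "\<exists>!x. (x, y + smul V l' x) \<in> A" using uniq by blast
  next
    fix x y
    show "(x, y + smul V l' x) \<in> A \<longrightarrow> cnorm V x \<le> B * cnorm V y"
    proof
      assume h: "(x, y + smul V l' x) \<in> A"
      obtain a where "(a, y + smul V l' a) \<in> A" "cnorm V a \<le> B * cnorm V y" using exist by blast
      then show "cnorm V x \<le> B * cnorm V y" using uniq[OF h] by blast
    qed
  qed
qed

end



locale phil = symop V S for V :: "('a::ab_group_add) cip" and S +
  fixes K :: "('k::ab_group_add) cip" and Gm Gp :: "'a \<Rightarrow> 'k" and C :: "'k \<Rightarrow> 'k"
  assumes bt: "boundary_triplet V S K Gm Gp"
    and chf: "\<And>l. Im l > 0 \<Longrightarrow> {u + v | u v. u \<in> Defs.dom S \<and> v \<in> defect_space V S l}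
               = {f \<in> Defs.dom (adjoint V S). C (Gp f) = Gm f}"
    and ndef: "\<exists>e. e \<in> defect_space V S \<i> \<and> e \<noteq> 0"

sublocale phil \<subseteq> K: hsp K
  using bt unfolding boundary_triplet_def hsp_def by blast

context phil begin

lemma Nd_iff: "f \<in> defect_space V S l \<longleftrightarrow> (f, smul V l f) \<in> adjoint V S"
  unfolding defect_space_def by simp

lemma domSst: "f \<in> Defs.dom (adjoint V S) \<longleftrightarrow> (\<exists>f'. (f,f') \<in> adjoint V S)"
  unfolding Defs.dom_def by force

lemma Gadd: "f \<in> Defs.dom (adjoint V S) \<Longrightarrow> g \<in> Defs.dom (adjoint V S) \<Longrightarrow>
   Gm (f + g) = Gm f + Gm g \<and> Gp (f + g) = Gp f + Gp g"
  using bt unfolding boundary_triplet_def by blast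

lemma green: "(f,f') \<in> adjoint V S \<Longrightarrow> (g,g') \<in> adjoint V S \<Longrightarrow>
   inner V f' g - inner V f g' = \<i> * (inner K (Gp f) (Gp g) - inner K (Gm f) (Gm g))"
  using bt unfolding boundary_triplet_def by blast

lemma surj: "\<exists>f\<in>Defs.dom (adjoint V S). Gm f = a \<and> Gp f = b"
  using bt unfolding boundary_triplet_def by blast

lemma domS_Sst: "d \<in> Defs.dom S \<Longrightarrow> d \<in> Defs.dom (adjoint V S)"
  using S_sub unfolding dom_iff domSst by blast

lemma GD0: assumes d: "d \<in> Defs.dom S" shows "Gm d = 0 \<and> Gp d = 0"
proof -
  obtain w where dw: "(d,w) \<in> S" using d dom_iff by blast
  have dws: "(d,w) \<in> adjoint V S" using dw S_sub by blast
  have z: "inner K (Gp d) (Gp g) = inner K (Gm d) (Gm g)" if "(g,g') \<in> adjoint V S" for g g'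
  proof -
    have "inner V w g = inner V d g'" using that dw unfolding adj_iff by blast
    then show ?thesis using green[OF dws that] by simp
  qed
  obtain g1 where g1: "g1 \<in> Defs.dom (adjoint V S)" "Gm g1 = 0" "Gp g1 = Gp d" using surj by blast
  obtain g1' where "(g1,g1') \<in> adjoint V S" using g1(1) domSst by blast
  from z[OF this] g1 have "inner K (Gp d) (Gp d) = 0" by simp
  then have p: "Gp d = 0" by (rule K.ip_z)
  obtain g2 where g2: "g2 \<in> Defs.dom (adjoint V S)" "Gm g2 = Gm d" "Gp g2 = 0" using surj by blast
  obtain g2' where "(g2,g2') \<in> adjoint V S" using g2(1) domSst by blast
  from z[OF this] g2 have "inner K (Gm d) (Gm d) = 0" by simp
  then have "Gm d = 0" by (rule K.ip_z)
  with p show ?thesis by simp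
qed

lemma zero_dom: "0 \<in> Defs.dom S" using gs_zero[OF S_gs] dom_iff by blast

lemma N_M: assumes "Im l > 0" "(n, smul V l n) \<in> adjoint V S" shows "C (Gp n) = Gm n"
proof -
  have "n \<in> {u + v | u v. u \<in> Defs.dom S \<and> v \<in> defect_space V S l}"
    using assms(2) zero_dom unfolding Nd_iff by force
  then show ?thesis using chf[OF assms(1)] by blast
qed

lemma Mdec: assumes "Im l > 0" "f \<in> Defs.dom (adjoint V S)" "C (Gp f) = Gm f"
  shows "\<exists>d n. d \<in> Defs.dom S \<and> (n, smul V l n) \<in> adjoint V S \<and> f = d + n"
proof -
  have "f \<in> {u + v | u v. u \<in> Defs.dom S \<and> v \<in> defect_space V S l}"
    using chf[OF assms(1)] assms(2,3) by blast
  then show ?thesis unfolding Nd_iff by blast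
qed

lemma Ctr_up: assumes "Im l > 0" "Im l' > 0" "(k, smul V l k) \<in> adjoint V S"
  shows "\<exists>d k'. d \<in> Defs.dom S \<and> (k', smul V l' k') \<in> adjoint V S \<and> k = d + k'"
proof -
  have "k \<in> Defs.dom (adjoint V S)" using assms(3) domSst by blast
  then show ?thesis using Mdec[OF assms(2)] N_M[OF assms(1,3)] by blast
qed

lemma G_dec: assumes "d \<in> Defs.dom S" "(n, n') \<in> adjoint V S"
  shows "Gm (d + n) = Gm n \<and> Gp (d + n) = Gp n"
proof -
  have "n \<in> Defs.dom (adjoint V S)" using assms(2) domSst by blast
  then show ?thesis using Gadd[OF domS_Sst[OF assms(1)]] GD0[OF assms(1)] by simp
qed

lemma GpN: assumes "Im l > 0"
  shows "\<exists>f. (f, smul V l f) \<in> adjoint V S \<and> Gp f = a \<and> Gm f = C a"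
proof -
  obtain f0 where f0: "f0 \<in> Defs.dom (adjoint V S)" "Gm f0 = C a" "Gp f0 = a" using surj by blast
  obtain d n where dn: "d \<in> Defs.dom S" "(n, smul V l n) \<in> adjoint V S" "f0 = d + n"
    using Mdec[OF assms f0(1)] f0 by auto
  then show ?thesis using G_dec[OF dn(1,2)] f0 by auto
qed

lemma green_norm: assumes "(n, smul V l n) \<in> adjoint V S"
  shows "2 * Im l * nsq n = K.nsq (Gp n) - K.nsq (Gm n)"
proof -
  have "inner V (smul V l n) n - inner V n (smul V l n)
     = \<i> * (inner K (Gp n) (Gp n) - inner K (Gm n) (Gm n))" using green[OF assms assms] .
  then have "(l - cnj l) * complex_of_real (nsq n) = \<i> * complex_of_real (K.nsq (Gp n) - K.nsq (Gm n))"
    by (simp add: ip_sm_l ip_sm_r ip_self K.ip_self algebra_simps)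
  moreover have "l - cnj l = \<i> * complex_of_real (2 * Im l)" by (simp add: complex_eq_iff)
  ultimately have "\<i> * complex_of_real (2 * Im l * nsq n) = \<i> * complex_of_real (K.nsq (Gp n) - K.nsq (Gm n))"
    by (simp add: algebra_simps)
  then show ?thesis by (metis complex_i_not_zero mult_cancel_left of_real_eq_iff)
qed

end



context phil begin

lemma DN0': "Im l \<noteq> 0 \<Longrightarrow> d \<in> Defs.dom S \<Longrightarrow> (d, smul V l d) \<in> adjoint V S \<Longrightarrow> d = 0"
  by (rule DN0)

lemma nonzero_N: assumes "Im l > 0" shows "\<exists>f. (f, smul V l f) \<in> adjoint V S \<and> f \<noteq> 0"
proof -
  obtain e where e: "(e, smul V \<i> e) \<in> adjoint V S" "e \<noteq> 0" using ndef unfolding Nd_iff by blast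
  obtain d f where df: "d \<in> Defs.dom S" "(f, smul V l f) \<in> adjoint V S" "e = d + f"
    using Ctr_up[OF _ assms e(1)] by auto
  have "f \<noteq> 0"
  proof
    assume "f = 0"
    then have "e = d" using df by simp
    then have "e = 0" using DN0[of \<i> d] df(1) e(1) by simp
    with e(2) show False by simp
  qed
  with df show ?thesis by blast
qed

lemma real_not_res:
  assumes SA: "S \<subseteq> A" and x: "Im x = 0"
  shows "x \<notin> resolvent_set V A"
proof
  assume "x \<in> resolvent_set V A"
  then obtain M where M: "\<And>u y. (u, y + smul V x u) \<in> A \<Longrightarrow> cnorm V u \<le> M * cnorm V y"
    unfolding resolvent_set_def by blast
  define \<epsilon> where "\<epsilon> = 1 / (2 * (\<bar>M\<bar> + 1))"
  have e0: "\<epsilon> > 0" unfolding \<epsilon>_def by (simp add: add_pos_nonneg)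
  define a where "a = complex_of_real \<epsilon> * \<i>"
  define l where "l = x + a"
  define l' where "l' = x + a + a"
  have il: "Im l = \<epsilon>" "Im l' = 2 * \<epsilon>" unfolding l_def l'_def a_def using x by simp_all
  obtain f where f: "(f, smul V l f) \<in> adjoint V S" "f \<noteq> 0" using nonzero_N[of l] il e0 by auto
  obtain d g where dg: "d \<in> Defs.dom S" "(g, smul V l' g) \<in> adjoint V S" "f = d + g"
    using Ctr_up[of l l' f] il e0 f(1) by auto
  have Gfg: "Gm f = Gm g \<and> Gp f = Gp g" using G_dec[OF dg(1,2)] dg(3) by simp
  have "2 * \<epsilon> * nsq f = 2 * (2 * \<epsilon>) * nsq g"
    using green_norm[OF f(1)] green_norm[OF dg(2)] Gfg il by simp
  then have nf: "nsq f = 2 * nsq g" using e0 by simp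
  obtain w where dw: "(d,w) \<in> S" using dg(1) dom_iff by blast
  have "(d, smul V l f - smul V l' g) \<in> adjoint V S"
    using gs_diff[OF Sst_gs f(1) dg(2)] dg(3) by simp
  then have we: "w = smul V l f - smul V l' g" using dw S_sub Sst_fun by blast
  have a2: "smul V (a * 2) g = smul V a g + smul V a g"
    using sm_add_l[of a a g] by (simp add: mult_2_right)
  have wx: "w - smul V x d = smul V a (d - g)"
    using a2 unfolding we dg(3) l_def l'_def by (simp add: sm_add_l sm_add_r sm_diff_r algebra_simps)
  have "(d, (w - smul V x d) + smul V x d) \<in> A" using dw SA by auto
  then have dle: "cnorm V d \<le> M * cnorm V (smul V a (d - g))" using M wx by metis
  have ca: "cmod a = \<epsilon>" unfolding a_def using e0 by (simp add: norm_mult)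
  have "nsq (d - g) = 2 * nsq d" using nf unfolding dg(3) by (simp add: nsq_add nsq_diff)
  then have cdg: "cnorm V (d - g) = sqrt 2 * cnorm V d" by (simp add: cnorm_eq real_sqrt_mult)
  have "cnorm V d \<le> (M * \<epsilon> * sqrt 2) * cnorm V d" using dle by (simp add: cnorm_sm ca cdg mult.assoc mult.left_commute)
  moreover have "M * \<epsilon> * sqrt 2 < 1"
  proof -
    have "M * \<epsilon> \<le> \<bar>M\<bar> * \<epsilon>" using e0 by (simp add: mult_right_mono)
    also have "\<bar>M\<bar> * \<epsilon> < 1 / 2" unfolding \<epsilon>_def by (simp add: field_simps)
    finally have m: "M * \<epsilon> < 1/2" .
    have s2: "sqrt 2 < 2" using real_sqrt_less_iff[of 2 4] by simp
    show ?thesis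
    proof (cases "M * \<epsilon> \<le> 0")
      case True
      then have "M * \<epsilon> * sqrt 2 \<le> 0" by (simp add: mult_nonpos_nonneg)
      then show ?thesis by simp
    next
      case False
      then have "M * \<epsilon> * sqrt 2 < (1/2) * 2" using m s2 by (intro mult_strict_mono) auto
      then show ?thesis by simp
    qed
  qed
  ultimately have "cnorm V d \<le> 0" using cnorm_nonneg[of d]
    by (smt (verit, best) mult_le_cancel_right1)
  then have "d = 0" using cnorm_nonneg[of d] cnorm_eq0 by (simp add: order_antisym)
  then have "f = g" using dg(3) by simp
  then have "smul V l f = smul V l' f" using f(1) dg(2) Sst_fun by blast
  then have "smul V (l - l') f = 0" by (simp add: sm_diff_l)
  moreover have "l - l' \<noteq> 0" unfolding l_def l'_def a_def using e0 by (simp add: complex_eq_iff)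
  ultimately have "f = 0" by (rule sm_cancel)
  with f(2) show False by simp
qed

lemma orth_lemma:
  assumes mu: "Im \<mu> < 0" and g: "(g, smul V \<mu> g) \<in> adjoint V S"
    and l': "Im l' > 0" and h: "(h, smul V l' h) \<in> adjoint V S" and ne: "\<mu> \<noteq> cnj l'"
  shows "inner V g h = 0"
proof -
  have lam: "Im (cnj \<mu>) > 0" using mu by simp
  have claim: "inner K (Gp g) b = inner K (Gm g) (C b)" for b
  proof -
    obtain f where f: "(f, smul V (cnj \<mu>) f) \<in> adjoint V S" "Gp f = b" "Gm f = C b" using GpN[OF lam] by blast
    have "inner V (smul V \<mu> g) f - inner V g (smul V (cnj \<mu>) f) = 0"
      by (simp add: ip_sm_l ip_sm_r)
    then have "\<i> * (inner K (Gp g) b - inner K (Gm g) (C b)) = 0" using green[OF g f(1)] f by simp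
    then show ?thesis by simp
  qed
  have "inner V (smul V \<mu> g) h - inner V g (smul V l' h) = \<i> * (inner K (Gp g) (Gp h) - inner K (Gm g) (Gm h))"
    using green[OF g h] .
  also have "Gm h = C (Gp h)" using N_M[OF l' h] by simp
  finally have "(\<mu> - cnj l') * inner V g h = \<i> * (inner K (Gp g) (Gp h) - inner K (Gm g) (C (Gp h)))"
    by (simp add: ip_sm_l ip_sm_r algebra_simps)
  then have "(\<mu> - cnj l') * inner V g h = 0" using claim by simp
  then show ?thesis using ne by simp
qed

lemma Ctr_down: assumes mu: "Im \<mu> < 0" and mu': "Im \<mu>' < 0" and g: "(g, smul V \<mu> g) \<in> adjoint V S"
  shows "\<exists>d g'. d \<in> Defs.dom S \<and> (g', smul V \<mu>' g') \<in> adjoint V S \<and> g = d + g'"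
proof (cases "\<mu> = \<mu>'")
  case True then show ?thesis using g zero_dom by force
next
  case False
  define z where "z = smul V (\<mu> - \<mu>') g"
  have m0: "Im \<mu>' \<noteq> 0" using mu' by simp
  obtain d w n where dw: "(d,w) \<in> S" and n: "(n, smul V (cnj \<mu>') n) \<in> adjoint V S"
    and ze: "z = (w - smul V \<mu>' d) + n" using H1[OF m0, of z] by blast
  have "inner V g n = 0"
    by (rule orth_lemma[OF mu g _ n]) (use mu' False in auto)
  then have "inner V z n = 0" unfolding z_def by (simp add: ip_sm_l)
  moreover have "inner V z n = nsq n + 0" unfolding ze using ran_orth[OF dw n] by (simp add: ip_add_l ip_self)
  ultimately have "n = 0" using nsq_eq0 by simp
  then have ze': "z = w - smul V \<mu>' d" using ze by simp
  have "(g - d, smul V \<mu> g - w) \<in> adjoint V S" using gs_diff[OF Sst_gs g] dw S_sub by blast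
  moreover have "smul V \<mu> g - w = smul V \<mu>' (g - d)"
  proof -
    have "w = z + smul V \<mu>' d" using ze' by simp
    then show ?thesis unfolding z_def by (simp add: sm_diff_l sm_diff_r algebra_simps)
  qed
  ultimately have "(g - d, smul V \<mu>' (g - d)) \<in> adjoint V S" by simp
  moreover have "d \<in> Defs.dom S" using dw dom_iff by blast
  ultimately show ?thesis by (intro exI[of _ d] exI[of _ "g - d"]) simp
qed

lemma classify:
  assumes Aop: "is_operator V A" and SA: "S \<subseteq> A" and AS: "A \<subseteq> adjoint V S"
  shows "spectrum V A = {z. Im z = 0}
       \<or> spectrum V A = {z. Im z \<le> 0} \<or> spectrum V A = {z. Im z \<ge> 0}
       \<or> spectrum V A = UNIV"
proof -
  let ?R = "resolvent_set V A"
  have R: "z \<notin> ?R" if "Im z = 0" for z using real_not_res[OF SA that] .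
  have U: "l' \<in> ?R" if "Im l > 0" "Im l' > 0" "l \<in> ?R" for l l'
    using res_transfer[OF Aop SA AS _ _ _ _ that(3)] Ctr_up that(1,2) by simp
  have L: "l' \<in> ?R" if "Im l < 0" "Im l' < 0" "l \<in> ?R" for l l'
    using res_transfer[OF Aop SA AS _ _ _ _ that(3)] Ctr_down that(1,2) by simp
  have sp: "spectrum V A = UNIV - ?R" unfolding spectrum_def ..
  consider (both) "\<exists>l. Im l > 0 \<and> l \<in> ?R" "\<exists>l. Im l < 0 \<and> l \<in> ?R"
    | (up) "\<exists>l. Im l > 0 \<and> l \<in> ?R" "\<not> (\<exists>l. Im l < 0 \<and> l \<in> ?R)"
    | (low) "\<not> (\<exists>l. Im l > 0 \<and> l \<in> ?R)" "\<exists>l. Im l < 0 \<and> l \<in> ?R"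
    | (none) "\<not> (\<exists>l. Im l > 0 \<and> l \<in> ?R)" "\<not> (\<exists>l. Im l < 0 \<and> l \<in> ?R)" by blast
  then show ?thesis
  proof cases
    case both
    then obtain l1 l2 where h: "Im l1 > 0" "l1 \<in> ?R" "Im l2 < 0" "l2 \<in> ?R" by blast
    have "z \<in> ?R \<longleftrightarrow> Im z \<noteq> 0" for z
      using U[OF h(1) _ h(2), of z] L[OF h(3) _ h(4), of z] R[of z]
      by (cases "Im z" "0::real" rule: linorder_cases) auto
    then have "spectrum V A = {z. Im z = 0}" unfolding sp by auto
    then show ?thesis by simp
  next
    case up
    then obtain l1 where h: "Im l1 > 0" "l1 \<in> ?R" by blast
    have "z \<in> ?R \<longleftrightarrow> Im z > 0" for z
      using U[OF h(1) _ h(2), of z] up(2) R[of z]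
      by (cases "Im z" "0::real" rule: linorder_cases) auto
    then have "spectrum V A = {z. Im z \<le> 0}" unfolding sp by auto
    then show ?thesis by simp
  next
    case low
    then obtain l2 where h: "Im l2 < 0" "l2 \<in> ?R" by blast
    have "z \<in> ?R \<longleftrightarrow> Im z < 0" for z
      using L[OF h(1) _ h(2), of z] low(1) R[of z]
      by (cases "Im z" "0::real" rule: linorder_cases) auto
    then have "spectrum V A = {z. Im z \<ge> 0}" unfolding sp by auto
    then show ?thesis by simp
  next
    case none
    have "z \<notin> ?R" for z
      using none R[of z] by (cases "Im z" "0::real" rule: linorder_cases) auto
    then have "spectrum V A = UNIV" unfolding sp by auto
    then show ?thesis by simp
  qed
qed

end



theorem proposition4p1:
  fixes V :: "('a::ab_group_add) cip" and S A :: "('a \<times> 'a) set"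
  assumes "hilbert_space V" and "separable_space V"
    and "phillips_symmetric TYPE('k::ab_group_add) V S"
    and "is_operator V A" and "S \<subseteq> A" and "A \<subseteq> adjoint V S"
  shows "spectrum V A = {z. Im z = 0}
       \<or> spectrum V A = {z. Im z \<le> 0} \<or> spectrum V A = {z. Im z \<ge> 0}
       \<or> spectrum V A = UNIV"
proof -
  interpret hsp V by (rule hsp.intro) (rule assms(1))
  have sy: "symmetric_operator V S" and cl: "closed_operator V S" and ed: "equal_nonzero_defects V S"
    using assms(3) unfolding phillips_symmetric_def by blast+
  obtain K :: "'k cip" and Gm Gp Th C where bt: "boundary_triplet V S K Gm Gp"
    and cf: "characteristic_function V S K Gm Gp Th" and cst: "\<forall>l. Im l > 0 \<longrightarrow> Th l = C"
    using assms(3) unfolding phillips_symmetric_def by blast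
  have chf: "{u + v | u v. u \<in> Defs.dom S \<and> v \<in> defect_space V S l}
               = {f \<in> Defs.dom (adjoint V S). C (Gp f) = Gm f}" if "Im l > 0" for l
  proof -
    have "{u + v | u v. u \<in> Defs.dom S \<and> v \<in> defect_space V S l}
               = {f \<in> Defs.dom (adjoint V S). Th l (Gp f) = Gm f}"
      using cf that unfolding characteristic_function_def by blast
    moreover have "Th l = C" using cst that by blast
    ultimately show ?thesis by simp
  qed
  have nd: "\<exists>e. e \<in> defect_space V S \<i> \<and> e \<noteq> 0"
  proof -
    obtain Ep Em where ob: "orthonormal_basis_of V (defect_space V S \<i>) Ep" and ne: "Ep \<noteq> {}"
      using ed unfolding equal_nonzero_defects_def by blast
    obtain e where e: "e \<in> Ep" using ne by blast
    have ob1: "Ep \<subseteq> defect_space V S \<i>" and ob2: "\<forall>e\<in>Ep. inner V e e = 1"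
      using ob unfolding orthonormal_basis_of_def by simp_all
    have "e \<in> defect_space V S \<i>" using ob1 e by blast
    moreover have "inner V e e = 1" using ob2 e by simp
    moreover have "e \<noteq> 0" using calculation(2) by (metis ip_zero_l zero_neq_one)
    ultimately show ?thesis by blast
  qed
  interpret phil V S K Gm Gp C
    by (intro phil.intro symop.intro phil_axioms.intro assms(1) sy cl bt chf nd symop_axioms.intro hsp.intro)
  show ?thesis by (rule classify[OF assms(4,5,6)])
qed


end
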